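(* Let $\mathbb N$ be a strongly connected symmetric directed graph on $m$ vertices without self-arcs, with arc matrices $C_{ij}$ (each with $n$ columns) having orthonormal rows (so $C_{ij}C_{ij}'=I$), such that $\bar{\mathbb N}$ is well-configured. Let $d_i=|\mathcal N_i|$. For arbitrary $x_i(0)\in\mathbb R^n$, define for each agent $i$ $$x_i(t+1)=x_i(t)-\frac{1}{2(d_i+1)}\sum_{j\in\mathcal N_i}\big(C_{ij}'C_{ij}+C_{ji}'C_{ji}\big)\big(x_i(t)-x_j(t)\big).$$ Then all $x_i(t)$ converge to a common vector $x^*\in\mathbb R^n$ exponentially fast, i.e. there are constants $c>0$, $\rho\in[0,1)$ with $\|x_i(t)-x^*\|\le c\rho^t$ for all $i,t$.
   Context: A directed graph is symmetric if whenever $(i,j)$ is an arc so is $(j,i)$. $\mathcal N_i$ is the set of neighbors of agent $i$. Each arc $(j,i)$ carries a real matrix $C_{ji}$ with $n$ columns; $'$ denotes transpose. $\bar{\mathbb N}$ is well-configured if for all $x_1,\dots,x_m\in\mathbb R^n$, $C_{ji}x_i=C_{ji}x_j$ for every arc $(j,i)$ implies $x_1=\cdots=x_m$. *)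

theory Defs
  imports "Jordan_Normal_Form.Matrix"
begin

text \<open>Agents are the vertices 0..<m; the arc set A is a relation on them.
  An arc (j,i) carries the real matrix C j i. Vectors in R^n are
  elements of carrier_vec n.\<close>

definition neighbors :: "(nat \<times> nat) set \<Rightarrow> nat \<Rightarrow> nat set" where
  "neighbors A i = {j. (j, i) \<in> A}"

definition strongly_connected :: "nat \<Rightarrow> (nat \<times> nat) set \<Rightarrow> bool" where
  "strongly_connected m A \<longleftrightarrow> (\<forall>i<m. \<forall>j<m. (i, j) \<in> A\<^sup>*)"

definition well_configured ::
  "nat \<Rightarrow> nat \<Rightarrow> (nat \<times> nat) set \<Rightarrow> (nat \<Rightarrow> nat \<Rightarrow> real mat) \<Rightarrow> bool" where
  "well_configured m n A C \<longleftrightarrow>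
     (\<forall>x :: nat \<Rightarrow> real vec. (\<forall>i<m. x i \<in> carrier_vec n) \<longrightarrow>
        (\<forall>(j, i) \<in> A. C j i *\<^sub>v x i = C j i *\<^sub>v x j) \<longrightarrow>
        (\<forall>i<m. \<forall>j<m. x i = x j))"

definition vnorm :: "real vec \<Rightarrow> real" where
  "vnorm v = sqrt (\<Sum>k<dim_vec v. (v $ k)\<^sup>2)"

end

theory Submission imports Defs "HOL-Analysis.Function_Topology" "HOL-Analysis.Convex" begin

definition mv :: "real mat \<Rightarrow> nat \<Rightarrow> (nat \<Rightarrow> real) \<Rightarrow> nat \<Rightarrow> real" where
  "mv D n u r = (\<Sum>k<n. D $$ (r,k) * u k)"
definition tv :: "real mat \<Rightarrow> (nat \<Rightarrow> real) \<Rightarrow> nat \<Rightarrow> real" where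
  "tv D y k = (\<Sum>r<dim_row D. D $$ (r,k) * y r)"
definition nrm2 :: "nat \<Rightarrow> (nat \<Rightarrow> real) \<Rightarrow> real" where
  "nrm2 n u = (\<Sum>k<n. (u k)^2)"

lemma nrm2_nonneg: "0 \<le> nrm2 n u" by (simp add: nrm2_def sum_nonneg)

lemma ip_tv: "(\<Sum>k<n. u k * tv D (mv D n u) k) = nrm2 (dim_row D) (mv D n u)"
proof -
  have "(\<Sum>k<n. u k * tv D (mv D n u) k) = (\<Sum>k<n. \<Sum>r<dim_row D. D $$ (r,k) * u k * mv D n u r)"
    by (simp add: tv_def sum_distrib_left mult_ac)
  also have "\<dots> = (\<Sum>r<dim_row D. \<Sum>k<n. D $$ (r,k) * u k * mv D n u r)" by (rule sum.swap)
  also have "\<dots> = (\<Sum>r<dim_row D. mv D n u r * mv D n u r)"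
  proof (intro sum.cong refl)
    fix r
    show "(\<Sum>k<n. D $$ (r,k) * u k * mv D n u r) = mv D n u r * mv D n u r"
      by (simp add: mv_def sum_distrib_right)
  qed
  finally show ?thesis by (simp add: nrm2_def power2_eq_square)
qed

lemma nrm2_tv:
  assumes D: "D \<in> carrier_mat p n" and o: "D * transpose_mat D = 1\<^sub>m p"
  shows "nrm2 n (tv D y) = nrm2 p y"
proof -
  have dr: "dim_row D = p" using D by auto
  have G: "(\<Sum>k<n. D $$ (r,k) * D $$ (s,k)) = (if r = s then 1 else 0)" if "r<p" "s<p" for r s
  proof -
    have "(D * transpose_mat D) $$ (r,s) = (\<Sum>k<n. D $$ (r,k) * D $$ (s,k))"
      using D that by (simp add: scalar_prod_def atLeast0LessThan)
    then show ?thesis using o that by simp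
  qed
  have "nrm2 n (tv D y) = (\<Sum>k<n. (\<Sum>r<p. D$$(r,k)*y r) * (\<Sum>s<p. D$$(s,k)*y s))"
    by (simp add: nrm2_def tv_def dr power2_eq_square)
  also have "\<dots> = (\<Sum>k<n. \<Sum>r<p. \<Sum>s<p. y r * y s * (D$$(r,k)*D$$(s,k)))"
    by (simp add: sum_product mult_ac)
  also have "\<dots> = (\<Sum>r<p. \<Sum>k<n. \<Sum>s<p. y r * y s * (D$$(r,k)*D$$(s,k)))"
    by (subst sum.swap) (rule refl)
  also have "\<dots> = (\<Sum>r<p. \<Sum>s<p. \<Sum>k<n. y r * y s * (D$$(r,k)*D$$(s,k)))"
    by (rule sum.cong[OF refl], rule sum.swap)
  also have "\<dots> = (\<Sum>r<p. \<Sum>s<p. y r * y s * (if r = s then 1 else 0))"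
    by (intro sum.cong refl) (simp add: sum_distrib_left[symmetric] G)
  also have "\<dots> = (\<Sum>r<p. y r * y r)"
    by (intro sum.cong refl) (simp add: if_distrib cong: if_cong)
  finally show ?thesis by (simp add: nrm2_def power2_eq_square)
qed

lemma pair_ip:
  "(\<Sum>k<n. d k * (tv D1 (mv D1 n d) k + tv D2 (mv D2 n d) k))
     = nrm2 (dim_row D1) (mv D1 n d) + nrm2 (dim_row D2) (mv D2 n d)"
  using ip_tv[where n=n and u=d and D=D1] ip_tv[where n=n and u=d and D=D2] by (simp add: distrib_left sum.distrib)

lemma nrm2_add: "nrm2 n (\<lambda>k. a k + b k) \<le> 2 * nrm2 n a + 2 * nrm2 n b"
proof -
  have "(a k + b k)^2 \<le> 2 * (a k)^2 + 2 * (b k)^2" for k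
    using zero_le_power2[of "a k - b k"] unfolding power2_eq_square by (simp add: algebra_simps)
  then have "(\<Sum>k<n. (a k + b k)^2) \<le> (\<Sum>k<n. 2 * (a k)^2 + 2 * (b k)^2)"
    by (intro sum_mono) auto
  then show ?thesis unfolding nrm2_def
    by (simp add: sum_distrib_left sum.distrib)
qed

lemma pair_sq:
  assumes "D1 \<in> carrier_mat (dim_row D1) n" "D1 * transpose_mat D1 = 1\<^sub>m (dim_row D1)"
    "D2 \<in> carrier_mat (dim_row D2) n" "D2 * transpose_mat D2 = 1\<^sub>m (dim_row D2)"
  shows "nrm2 n (\<lambda>k. tv D1 (mv D1 n d) k + tv D2 (mv D2 n d) k)
     \<le> 2 * (nrm2 (dim_row D1) (mv D1 n d) + nrm2 (dim_row D2) (mv D2 n d))"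
  using nrm2_add[where n=n and a="tv D1 (mv D1 n d)" and b="tv D2 (mv D2 n d)"]
    nrm2_tv[OF assms(1,2)] nrm2_tv[OF assms(3,4)] by simp

lemma mv_diff: "mv D n (\<lambda>l. u l - v l) r = mv D n u r - mv D n v r"
  by (simp add: mv_def algebra_simps sum_subtractf)

lemma mv_scale: "mv D n (\<lambda>l. c * u l) r = c * mv D n u r"
  by (simp add: mv_def sum_distrib_left mult_ac)

lemma tv_neg: "tv D (\<lambda>r. - u r) k = - tv D u k"
  by (simp add: tv_def sum_negf)

lemma mv_neg: "mv D n (\<lambda>l. - u l) r = - mv D n u r"
  by (simp add: mv_def sum_negf)

lemma nrm2_scale: "nrm2 n (\<lambda>k. c * u k) = c^2 * nrm2 n u"
  by (simp add: nrm2_def sum_distrib_left power_mult_distrib)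

lemma mat_vec_mv: "C \<in> carrier_mat p n \<Longrightarrow> v \<in> carrier_vec n \<Longrightarrow> r < p \<Longrightarrow> (C *\<^sub>v v) $ r = mv C n (\<lambda>l. v $ l) r"
  by (auto simp: mv_def scalar_prod_def atLeast0LessThan mult_ac)

lemma mv_row: "C \<in> carrier_mat p n \<Longrightarrow> v \<in> carrier_vec n \<Longrightarrow> r < p \<Longrightarrow> row C r \<bullet> v = mv C n (\<lambda>l. v $ l) r"
  by (auto simp: mv_def scalar_prod_def atLeast0LessThan mult_ac)

lemma tmat_part:
  assumes C: "C \<in> carrier_mat p n" and v: "v \<in> carrier_vec n" and k: "k < n"
  shows "((transpose_mat C * C) *\<^sub>v v) $ k = tv C (mv C n (\<lambda>l. v $ l)) k"
proof -
  have "((transpose_mat C * C) *\<^sub>v v) = transpose_mat C *\<^sub>v (C *\<^sub>v v)"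
    using C v by (intro assoc_mult_mat_vec) auto
  also have "\<dots> $ k = (\<Sum>r<p. C $$ (r,k) * (C *\<^sub>v v) $ r)"
    using C v k by (simp add: scalar_prod_def atLeast0LessThan mult_ac)
  also have "\<dots> = tv C (mv C n (\<lambda>l. v $ l)) k"
    using C v by (simp add: tv_def) (intro sum.cong refl, simp add: mv_row[OF C v])
  finally show ?thesis .
qed

lemma cont_coord [continuous_intros]: "continuous_on S (\<lambda>f. f x)"
  by (rule continuous_on_subset[OF continuous_on_product_coordinates]) simp

lemma nrm2_zero: "nrm2 p u = 0 \<Longrightarrow> r < p \<Longrightarrow> u r = 0"
  unfolding nrm2_def by (subst (asm) sum_nonneg_eq_0_iff) auto

lemma mv_cong: "(\<And>l. l < n \<Longrightarrow> u l = v l) \<Longrightarrow> mv D n u r = mv D n v r"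
  by (simp add: mv_def)

locale cons_setup =
  fixes m n :: nat and A :: "(nat \<times> nat) set" and C :: "nat \<Rightarrow> nat \<Rightarrow> real mat"
  assumes arcs: "A \<subseteq> {0..<m} \<times> {0..<m}" and symm: "sym A"
    and cols: "\<forall>(i, j) \<in> A. C i j \<in> carrier_mat (dim_row (C i j)) n"
    and orth: "\<forall>(i, j) \<in> A. C i j * transpose_mat (C i j) = 1\<^sub>m (dim_row (C i j))"
    and wc: "well_configured m n A C"
begin

abbreviation "N \<equiv> neighbors A"
definition w :: "nat \<Rightarrow> real" where "w i = real (card (N i)) + 1"

lemma N_iff: "j \<in> N i \<longleftrightarrow> (j,i) \<in> A" by (simp add: neighbors_def)
lemma N_sub: "N i \<subseteq> {..<m}" using arcs by (auto simp: neighbors_def)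
lemma N_fin: "finite (N i)" using N_sub finite_subset by blast
lemma N_arc1: "j \<in> N i \<Longrightarrow> (j,i) \<in> A" by (simp add: neighbors_def)
lemma N_arc2: "j \<in> N i \<Longrightarrow> (i,j) \<in> A" using symm by (auto simp: neighbors_def sym_def)
lemma N_lt: "j \<in> N i \<Longrightarrow> j < m" using N_sub by auto
lemma N_lt2: "j \<in> N i \<Longrightarrow> i < m" using arcs by (auto simp: neighbors_def)
lemma card_N: "card (N i) \<le> m" using card_mono[OF _ N_sub] by simp
lemma w_ge1: "w i \<ge> 1" by (simp add: w_def)
lemma w_pos: "w i > 0" by (simp add: w_def)
lemma w_le: "w i \<le> real m + 1" using card_N[of i] by (simp add: w_def)

lemma fin_A: "finite A"
  using arcs finite_subset by (metis finite_SigmaI finite_atLeastLessThan)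

lemma Sigma_eq: "Sigma {..<m} N = A"
  using arcs symm by (auto simp: neighbors_def sym_def)

lemma sum_A: "(\<Sum>i<m. \<Sum>j\<in>N i. f i j) = (\<Sum>(i,j)\<in>A. f i j)"
  by (simp add: sum.Sigma N_fin Sigma_eq)

lemma swap_sum: "(\<Sum>i<m. \<Sum>j\<in>N i. f i j) = (\<Sum>i<m. \<Sum>j\<in>N i. f j i)"
proof -
  have "(\<Sum>(i,j)\<in>A. f j i) = (\<Sum>(i,j)\<in>A. f i j)"
    by (rule sum.reindex_bij_witness[where i="\<lambda>(i,j). (j,i)" and j="\<lambda>(i,j). (j,i)"])
      (use symm in \<open>auto simp: sym_def\<close>)
  then show ?thesis by (simp add: sum_A)
qed

lemma half_sum:
  fixes f r :: "nat \<Rightarrow> nat \<Rightarrow> real"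
  assumes "\<And>i j. f i j + f j i = r i j"
  shows "(\<Sum>i<m. \<Sum>j\<in>N i. f i j) = (\<Sum>i<m. \<Sum>j\<in>N i. r i j) / 2"
proof -
  have "(\<Sum>i<m. \<Sum>j\<in>N i. r i j) = (\<Sum>i<m. \<Sum>j\<in>N i. f i j) + (\<Sum>i<m. \<Sum>j\<in>N i. f j i)"
    by (simp add: assms[symmetric] sum.distrib)
  then show ?thesis using swap_sum[of f] by simp
qed

lemma Carc: "(i,j) \<in> A \<Longrightarrow> C i j \<in> carrier_mat (dim_row (C i j)) n"
  using cols by auto
lemma Orth: "(i,j) \<in> A \<Longrightarrow> C i j * transpose_mat (C i j) = 1\<^sub>m (dim_row (C i j))"
  using orth by auto

definition G :: "(nat \<Rightarrow> nat \<Rightarrow> real) \<Rightarrow> nat \<Rightarrow> nat \<Rightarrow> nat \<Rightarrow> real" where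
  "G y i j k = tv (C i j) (mv (C i j) n (\<lambda>l. y i l - y j l)) k
             + tv (C j i) (mv (C j i) n (\<lambda>l. y i l - y j l)) k"
definition q :: "(nat \<Rightarrow> nat \<Rightarrow> real) \<Rightarrow> nat \<Rightarrow> nat \<Rightarrow> real" where
  "q y i j = nrm2 (dim_row (C i j)) (mv (C i j) n (\<lambda>l. y i l - y j l))
           + nrm2 (dim_row (C j i)) (mv (C j i) n (\<lambda>l. y i l - y j l))"
definition V :: "(nat \<Rightarrow> nat \<Rightarrow> real) \<Rightarrow> real" where
  "V y = (\<Sum>i<m. w i * nrm2 n (y i))"
definition Q :: "(nat \<Rightarrow> nat \<Rightarrow> real) \<Rightarrow> real" where
  "Q y = (\<Sum>i<m. \<Sum>j\<in>N i. q y i j)"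

lemma q_nonneg: "0 \<le> q y i j" by (simp add: q_def nrm2_nonneg)
lemma Q_nonneg: "0 \<le> Q y" by (simp add: Q_def q_nonneg sum_nonneg)
lemma V_nonneg: "0 \<le> V y" unfolding V_def
  by (intro sum_nonneg mult_nonneg_nonneg) (auto intro: less_imp_le w_pos nrm2_nonneg)

lemma G_anti: "G y j i k = - G y i j k"
proof -
  have e: "(\<lambda>l. y j l - y i l) = (\<lambda>l. - (y i l - y j l))" by auto
  have e2: "mv D n (\<lambda>l. - (y i l - y j l)) = (\<lambda>r. - mv D n (\<lambda>l. y i l - y j l) r)" for D
    by (rule ext, rule mv_neg)
  show ?thesis unfolding G_def e e2 tv_neg by simp
qed

lemma ip_G: "(\<Sum>k<n. (y i k - y j k) * G y i j k) = q y i j"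
  unfolding G_def q_def by (rule pair_ip)

lemma sq_G: "j \<in> N i \<Longrightarrow> nrm2 n (G y i j) \<le> 2 * q y i j"
  unfolding G_def q_def
  by (rule pair_sq) (auto intro: Carc Orth N_arc1 N_arc2)

lemma step_V:
  assumes y': "\<And>i k. i < m \<Longrightarrow> k < n \<Longrightarrow> y' i k = y i k - (1/(2*w i)) * (\<Sum>j\<in>N i. G y i j k)"
  shows "V y' \<le> V y - Q y / (2*(real m+1))"
proof -
  define g where "g i k = (\<Sum>j\<in>N i. G y i j k)" for i k
  define Qi where "Qi i = (\<Sum>j\<in>N i. q y i j)" for i
  have Qi_nn: "0 \<le> Qi i" for i by (simp add: Qi_def q_nonneg sum_nonneg)
  have QQ: "Q y = (\<Sum>i<m. Qi i)" by (simp add: Q_def Qi_def)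
  have cross: "(\<Sum>i<m. \<Sum>k<n. y i k * g i k) = Q y / 2"
  proof -
    have "(\<Sum>i<m. \<Sum>k<n. y i k * g i k) = (\<Sum>i<m. \<Sum>j\<in>N i. \<Sum>k<n. y i k * G y i j k)"
      by (simp add: g_def sum_distrib_left) (rule sum.cong[OF refl], rule sum.swap)
    also have "\<dots> = (\<Sum>i<m. \<Sum>j\<in>N i. q y i j) / 2"
    proof (rule half_sum)
      fix i j
      show "(\<Sum>k<n. y i k * G y i j k) + (\<Sum>k<n. y j k * G y j i k) = q y i j"
        unfolding ip_G[symmetric] G_anti[of y j i] by (simp add: sum.distrib[symmetric] algebra_simps)
    qed
    finally show ?thesis by (simp add: Q_def)
  qed
  have gb: "nrm2 n (g i) \<le> real (card (N i)) * (2 * Qi i)" for i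
  proof -
    have "nrm2 n (g i) \<le> (\<Sum>k<n. (\<Sum>j\<in>N i. (G y i j k)^2) * card (N i))"
      unfolding nrm2_def g_def by (intro sum_mono sum_squared_le_sum_of_squares)
    also have "\<dots> = real (card (N i)) * (\<Sum>j\<in>N i. nrm2 n (G y i j))"
      by (simp add: nrm2_def sum_distrib_left sum_distrib_right mult_ac) (rule sum.swap)
    also have "\<dots> \<le> real (card (N i)) * (\<Sum>j\<in>N i. 2 * q y i j)"
      by (intro mult_left_mono sum_mono sq_G) auto
    finally show ?thesis by (simp add: Qi_def sum_distrib_left)
  qed
  have per: "w i * nrm2 n (y' i) \<le> w i * nrm2 n (y i) - (\<Sum>k<n. y i k * g i k) + Qi i / 2 - Qi i / (2*(real m+1))"
    if i: "i < m" for i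
  proof -
    have wp: "w i > 0" by (rule w_pos)
    have "w i * nrm2 n (y' i) = (\<Sum>k<n. w i * (y i k - g i k / (2 * w i))^2)"
      using i by (simp add: nrm2_def sum_distrib_left y' g_def sum_divide_distrib)
    also have "\<dots> = (\<Sum>k<n. w i * (y i k)^2 - y i k * g i k + (g i k)^2 / (4 * w i))"
      using wp by (intro sum.cong refl) (simp add: field_simps power2_eq_square)
    also have "\<dots> = w i * nrm2 n (y i) - (\<Sum>k<n. y i k * g i k) + nrm2 n (g i) / (4 * w i)"
      by (simp add: nrm2_def sum.distrib sum_subtractf sum_distrib_left sum_divide_distrib)
    also have "nrm2 n (g i) / (4 * w i) \<le> real (card (N i)) * (2 * Qi i) / (4 * w i)"
      using wp gb[of i] by (intro divide_right_mono) auto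
    also have "real (card (N i)) * (2 * Qi i) / (4 * w i) = Qi i / 2 - Qi i / (2 * w i)"
      using wp by (simp add: w_def field_simps)
    finally have a: "w i * nrm2 n (y' i) \<le> w i * nrm2 n (y i) - (\<Sum>k<n. y i k * g i k) + (Qi i / 2 - Qi i / (2 * w i))"
      by simp
    have "Qi i / (2 * w i) \<ge> Qi i / (2*(real m+1))"
      using wp w_le[of i] Qi_nn[of i] by (intro divide_left_mono) auto
    with a show ?thesis by simp
  qed
  have "V y' \<le> (\<Sum>i<m. w i * nrm2 n (y i) - (\<Sum>k<n. y i k * g i k) + Qi i / 2 - Qi i / (2*(real m+1)))"
    unfolding V_def by (intro sum_mono per) auto
  also have "\<dots> = V y - Q y / 2 + Q y / 2 - Q y / (2*(real m+1))"
    by (simp add: V_def sum.distrib sum_subtractf sum_divide_distrib[symmetric] cross QQ)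
  finally show ?thesis by simp
qed

lemma Q_cong:
  assumes "\<And>i k. i<m \<Longrightarrow> k<n \<Longrightarrow> y i k = z i k"
  shows "Q y = Q z"
proof -
  have *: "mv D n (\<lambda>l. y i l - y j l) = mv D n (\<lambda>l. z i l - z j l)" if "i<m" "j<m" for D i j
    using assms that by (intro ext mv_cong) auto
  show ?thesis unfolding Q_def q_def
    by (intro sum.cong refl) (simp add: * N_lt)
qed

lemma V_cong:
  assumes "\<And>i k. i<m \<Longrightarrow> k<n \<Longrightarrow> y i k = z i k"
  shows "V y = V z"
  unfolding V_def nrm2_def using assms by (intro sum.cong refl) auto

lemma Q_scale: "Q (\<lambda>i k. c * y i k) = c^2 * Q y"
proof -
  have e: "(\<lambda>l. c * y i l - c * y j l) = (\<lambda>l. c * (y i l - y j l))" for i j by (auto simp: algebra_simps)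
  have e2: "mv D n (\<lambda>l. c * (y i l - y j l)) = (\<lambda>r. c * mv D n (\<lambda>l. y i l - y j l) r)" for D i j
    by (rule ext, rule mv_scale)
  show ?thesis unfolding Q_def q_def e e2 nrm2_scale by (simp add: sum_distrib_left distrib_left)
qed

lemma V_scale: "V (\<lambda>i k. c * y i k) = c^2 * V y"
proof -
  have "nrm2 n (\<lambda>k. c * y i k) = c^2 * nrm2 n (y i)" for i by (rule nrm2_scale)
  then show ?thesis unfolding V_def by (simp add: sum_distrib_left mult_ac)
qed

lemma coercive: "\<exists>\<gamma>>0. \<forall>y. (\<forall>k<n. (\<Sum>i<m. w i * y i k) = 0) \<longrightarrow> \<gamma> * V y \<le> Q y"
proof -
  define cu :: "(nat \<times> nat \<Rightarrow> real) \<Rightarrow> nat \<Rightarrow> nat \<Rightarrow> real" where "cu f = (\<lambda>i k. f (i,k))" for f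
  define B :: "(nat \<times> nat \<Rightarrow> real) set"
    where "B = PiE UNIV (\<lambda>p. if fst p < m \<and> snd p < n then {-1..1} else {0})"
  define Z where "Z f = (\<Sum>k<n. (\<Sum>i<m. w i * f (i,k))^2)" for f :: "nat \<times> nat \<Rightarrow> real"
  define K where "K = B \<inter> {f. V (cu f) = 1} \<inter> {f. Z f = 0}"
  have contV: "continuous_on UNIV (\<lambda>f. V (cu f))"
    unfolding V_def nrm2_def cu_def by (intro continuous_intros)
  have contZ: "continuous_on UNIV Z" unfolding Z_def by (intro continuous_intros)
  have contQ: "continuous_on UNIV (\<lambda>f. Q (cu f))"
    unfolding Q_def q_def nrm2_def mv_def cu_def by (intro continuous_intros)
  have "compactin (product_topology (\<lambda>_. euclidean) UNIV) B"
    unfolding B_def by (subst compactin_PiE) auto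
  then have cB: "compact B" by (simp add: euclidean_product_topology)
  have cK: "compact K" unfolding K_def
    by (intro compact_Int_closed cB closed_Collect_eq contV contZ continuous_on_const)
  have norm: "\<exists>f\<in>K. Q (cu f) = Q y / V y"
    if z: "\<forall>k<n. (\<Sum>i<m. w i * y i k) = 0" and vp: "V y > 0" for y
  proof -
    define s where "s = sqrt (V y)"
    have sp: "s > 0" using vp by (simp add: s_def)
    have s2: "s^2 = V y" using vp by (simp add: s_def)
    define z where "z i k = (1/s) * y i k" for i k
    define f where "f p = (if fst p < m \<and> snd p < n then z (fst p) (snd p) else 0)" for p
    have cz: "\<And>i k. i<m \<Longrightarrow> k<n \<Longrightarrow> cu f i k = z i k" by (simp add: cu_def f_def)
    have Vz: "V z = 1" unfolding z_def V_scale using sp s2 vp by (simp add: power_divide)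
    have "V (cu f) = V z" by (rule V_cong) (rule cz)
    then have Vf: "V (cu f) = 1" using Vz by simp
    have "Q (cu f) = Q z" by (rule Q_cong) (rule cz)
    also have "Q z = Q y / V y" unfolding z_def Q_scale
      using s2 by (simp add: power_divide)
    finally have Qf: "Q (cu f) = Q y / V y" .
    have Zf: "Z f = 0"
    proof -
      have "(\<Sum>i<m. w i * f (i,k)) = (1/s) * (\<Sum>i<m. w i * y i k)" if "k<n" for k
        using that by (simp add: f_def z_def sum_distrib_left mult_ac)
      then show ?thesis using z by (simp add: Z_def)
    qed
    have Bf: "f \<in> B"
    proof -
      have "\<bar>z i k\<bar> \<le> 1" if "i<m" "k<n" for i k
      proof -
        have "(z i k)^2 \<le> nrm2 n (z i)" unfolding nrm2_def
          using that by (intro member_le_sum) auto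
        also have "\<dots> \<le> w i * nrm2 n (z i)" using w_ge1[of i] nrm2_nonneg[of n "z i"]
          by (simp add: mult_le_cancel_right1)
        also have "\<dots> \<le> V z" unfolding V_def using that w_pos
          by (intro member_le_sum[where f="\<lambda>i. w i * nrm2 n (z i)"] mult_nonneg_nonneg)
             (auto intro: less_imp_le nrm2_nonneg)
        finally show ?thesis using Vz by (simp add: abs_square_le_1)
      qed
      then show ?thesis unfolding B_def by (force simp: PiE_iff f_def abs_le_iff)
    qed
    show ?thesis using Bf Vf Zf Qf by (auto simp: K_def)
  qed
  show ?thesis
  proof (cases "K = {}")
    case True
    show ?thesis
    proof (intro exI[of _ 1] conjI allI impI)
      fix y :: "nat \<Rightarrow> nat \<Rightarrow> real"
      assume z: "\<forall>k<n. (\<Sum>i<m. w i * y i k) = 0"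
      show "1 * V y \<le> Q y"
      proof (cases "V y > 0")
        case True then show ?thesis using norm[OF z] \<open>K = {}\<close> by auto
      next
        case False then show ?thesis using V_nonneg[of y] Q_nonneg[of y] by auto
      qed
    qed simp
  next
    case False
    obtain f0 where f0: "f0 \<in> K" and min: "\<And>f. f \<in> K \<Longrightarrow> Q (cu f0) \<le> Q (cu f)"
      using continuous_attains_inf[OF cK False continuous_on_subset[OF contQ]] by auto
    define y0 where "y0 = cu f0"
    have V1: "V y0 = 1" and Z0: "Z f0 = 0" using f0 by (auto simp: K_def y0_def)
    have gpos: "Q y0 > 0"
    proof (rule ccontr)
      assume "\<not> Q y0 > 0"
      then have Q0: "Q y0 = 0" using Q_nonneg[of y0] by simp
      have q0: "q y0 i j = 0" if "i<m" "j \<in> N i" for i j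
      proof -
        have a: "\<forall>i\<in>{..<m}. (\<Sum>j\<in>N i. q y0 i j) = 0"
          using Q0 unfolding Q_def
          by (subst (asm) sum_nonneg_eq_0_iff) (auto intro: sum_nonneg q_nonneg)
        then have "(\<Sum>j\<in>N i. q y0 i j) = 0" using that by blast
        then have "\<forall>j\<in>N i. q y0 i j = 0"
          by (subst (asm) sum_nonneg_eq_0_iff) (auto intro: N_fin q_nonneg)
        then show ?thesis using that by blast
      qed
      have mv0: "mv (C j i) n (\<lambda>l. y0 i l - y0 j l) r = 0"
        if "i<m" "j \<in> N i" "r < dim_row (C j i)" for i j r
      proof -
        have "nrm2 (dim_row (C j i)) (mv (C j i) n (\<lambda>l. y0 i l - y0 j l)) = 0"
          using q0[OF that(1,2)] 
            nrm2_nonneg[of "dim_row (C j i)" "mv (C j i) n (\<lambda>l. y0 i l - y0 j l)"]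
            nrm2_nonneg[of "dim_row (C i j)" "mv (C i j) n (\<lambda>l. y0 i l - y0 j l)"]
          unfolding q_def by linarith
        then show ?thesis using nrm2_zero that(3) by blast
      qed
      define xv where "xv i = vec n (\<lambda>k. y0 i k)" for i
      have xvc: "xv i \<in> carrier_vec n" for i by (simp add: xv_def)
      have "\<forall>(j, i) \<in> A. C j i *\<^sub>v xv i = C j i *\<^sub>v xv j"
      proof (clarify)
        fix j i assume ji: "(j,i) \<in> A"
        have jN: "j \<in> N i" using ji by (simp add: N_iff)
        have im: "i < m" using N_lt2[OF jN] .
        have Cc: "C j i \<in> carrier_mat (dim_row (C j i)) n" using Carc[OF ji] .
        show "C j i *\<^sub>v xv i = C j i *\<^sub>v xv j"
        proof (rule eq_vecI)
          fix r assume "r < dim_vec (C j i *\<^sub>v xv j)"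
          then have r: "r < dim_row (C j i)" by simp
          have "(C j i *\<^sub>v xv i) $ r - (C j i *\<^sub>v xv j) $ r
                = mv (C j i) n (\<lambda>l. y0 i l - y0 j l) r"
            unfolding mat_vec_mv[OF Cc xvc r] mv_diff[symmetric]
            by (rule mv_cong) (simp add: xv_def)
          then show "(C j i *\<^sub>v xv i) $ r = (C j i *\<^sub>v xv j) $ r"
            using mv0[OF im jN r] by simp
        qed simp
      qed
      moreover have "\<forall>i<m. xv i \<in> carrier_vec n" using xvc by blast
      ultimately have eqx: "\<forall>i<m. \<forall>j<m. xv i = xv j"
        using spec[OF wc[unfolded well_configured_def], of xv] by blast
      have mpos: "m > 0"
      proof (rule ccontr)
        assume "\<not> m > 0" then have "m = 0" by simp
        then show False using V1 unfolding V_def by simp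
      qed
      define c where "c k = y0 0 k" for k
      have same: "y0 i k = c k" if "i<m" "k<n" for i k
      proof -
        have "xv i = xv 0" using eqx that mpos by blast
        then have "xv i $ k = xv 0 $ k" by simp
        then show ?thesis using that by (simp add: xv_def c_def)
      qed
      have zero: "c k = 0" if k: "k<n" for k
      proof -
        have "(\<Sum>i<m. w i * f0 (i,k))^2 = 0"
          using Z0 k unfolding Z_def by (subst (asm) sum_nonneg_eq_0_iff) auto
        then have "(\<Sum>i<m. w i * y0 i k) = 0" by (simp add: y0_def cu_def)
        then have "(\<Sum>i<m. w i) * c k = 0"
          using same k by (simp add: sum_distrib_right)
        moreover have "(\<Sum>i<m. w i) > 0" using mpos w_pos by (intro sum_pos) auto
        ultimately show ?thesis by simp
      qed
      have "V y0 = 0" unfolding V_def nrm2_def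
        using same zero by (intro sum.neutral) auto
      then show False using V1 by simp
    qed
    show ?thesis
    proof (intro exI[of _ "Q y0"] conjI allI impI gpos)
      fix y :: "nat \<Rightarrow> nat \<Rightarrow> real"
      assume z: "\<forall>k<n. (\<Sum>i<m. w i * y i k) = 0"
      show "Q y0 * V y \<le> Q y"
      proof (cases "V y > 0")
        case True
        then obtain f where "f \<in> K" "Q (cu f) = Q y / V y" using norm[OF z] by auto
        then have "Q y0 \<le> Q y / V y" using min y0_def by metis
        then show ?thesis using True by (simp add: le_divide_eq)
      next
        case False then show ?thesis using V_nonneg[of y] Q_nonneg[of y] by auto
      qed
    qed
  qed
qed

lemma tcar: "(i,j) \<in> A \<Longrightarrow> transpose_mat (C i j) * C i j \<in> carrier_mat n n"
proof -
  assume a: "(i,j) \<in> A"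
  have c1: "C i j \<in> carrier_mat (dim_row (C i j)) n" using Carc[OF a] .
  have "transpose_mat (C i j) \<in> carrier_mat n (dim_row (C i j))"
    by (subst transpose_carrier_mat) (rule c1)
  then show ?thesis by (rule mult_carrier_mat[OF _ c1])
qed

lemma Mcar: "j \<in> N i \<Longrightarrow> (transpose_mat (C i j) * C i j + transpose_mat (C j i) * C j i) \<in> carrier_mat n n"
  by (rule add_carrier_mat[OF tcar[OF N_arc1]])

lemma Mcoord:
  assumes j: "j \<in> N i" and v: "v \<in> carrier_vec n" and k: "k < n"
  shows "((transpose_mat (C i j) * C i j + transpose_mat (C j i) * C j i) *\<^sub>v v) $ k
    = tv (C i j) (mv (C i j) n (\<lambda>l. v$l)) k + tv (C j i) (mv (C j i) n (\<lambda>l. v$l)) k"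
proof -
  have c1: "C i j \<in> carrier_mat (dim_row (C i j)) n" using Carc[OF N_arc2[OF j]] .
  have c2: "C j i \<in> carrier_mat (dim_row (C j i)) n" using Carc[OF N_arc1[OF j]] .
  have t1: "transpose_mat (C i j) * C i j \<in> carrier_mat n n" by (rule tcar[OF N_arc2[OF j]])
  have t2: "transpose_mat (C j i) * C j i \<in> carrier_mat n n" by (rule tcar[OF N_arc1[OF j]])
  have "(transpose_mat (C i j) * C i j + transpose_mat (C j i) * C j i) *\<^sub>v v
     = (transpose_mat (C i j) * C i j) *\<^sub>v v + (transpose_mat (C j i) * C j i) *\<^sub>v v"
    by (rule add_mult_distrib_mat_vec[OF t1 t2 v])
  also have "\<dots> $ k = ((transpose_mat (C i j) * C i j) *\<^sub>v v) $ k + ((transpose_mat (C j i) * C j i) *\<^sub>v v) $ k"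
  proof (rule index_add_vec(1))
    have "(transpose_mat (C j i) * C j i) *\<^sub>v v \<in> carrier_vec n" by (rule mult_mat_vec_carrier[OF t2 v])
    then have "dim_vec ((transpose_mat (C j i) * C j i) *\<^sub>v v) = n" by (rule carrier_vecD)
    with k show "k < dim_vec ((transpose_mat (C j i) * C j i) *\<^sub>v v)" by (simp only:)
  qed
  finally show ?thesis unfolding tmat_part[OF c1 v k] tmat_part[OF c2 v k] .
qed

lemma G_shift: "G (\<lambda>i k. y i k - c k) = G y"
  by (intro ext) (simp add: G_def)

end

theorem theorem5:
  fixes m n :: nat
    and A :: "(nat \<times> nat) set"
    and C :: "nat \<Rightarrow> nat \<Rightarrow> real mat"
    and x :: "nat \<Rightarrow> nat \<Rightarrow> real vec"
  assumes arcs: "A \<subseteq> {0..<m} \<times> {0..<m}"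
    and symm: "sym A"
    and no_loops: "\<forall>i. (i, i) \<notin> A"
    and sc: "strongly_connected m A"
    and cols: "\<forall>(i, j) \<in> A. C i j \<in> carrier_mat (dim_row (C i j)) n"
    and orth: "\<forall>(i, j) \<in> A. C i j * transpose_mat (C i j) = 1\<^sub>m (dim_row (C i j))"
    and wc: "well_configured m n A C"
    and init: "\<forall>i<m. x 0 i \<in> carrier_vec n"
    and step: "\<forall>t. \<forall>i<m. x (Suc t) i =
       x t i - (1 / (2 * (real (card (neighbors A i)) + 1))) \<cdot>\<^sub>v
         finsum_vec TYPE(real) n
           (\<lambda>j. (transpose_mat (C i j) * C i j + transpose_mat (C j i) * C j i)
                  *\<^sub>v (x t i - x t j))
           (neighbors A i)"
  shows "\<exists>xstar \<in> carrier_vec n. \<exists>c > 0. \<exists>\<rho>. 0 \<le> \<rho> \<and> \<rho> < 1 \<and>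
           (\<forall>t. \<forall>i<m. vnorm (x t i - xstar) \<le> c * \<rho> ^ t)"
proof -
  interpret cs: cons_setup m n A C using arcs symm cols orth wc by unfold_locales
  let ?M = "\<lambda>i j. transpose_mat (C i j) * C i j + transpose_mat (C j i) * C j i"
  have carr: "\<forall>i<m. x t i \<in> carrier_vec n" for t
  proof (induction t)
    case 0 show ?case using init by auto
  next
    case (Suc t)
    show ?case
    proof (intro allI impI)
      fix i assume i: "i<m"
      have Fc: "(\<lambda>j. ?M i j *\<^sub>v (x t i - x t j)) \<in> neighbors A i \<rightarrow> carrier_vec n"
        using cs.Mcar Suc i cs.N_lt by (auto intro!: mult_mat_vec_carrier)
      have "finsum_vec TYPE(real) n (\<lambda>j. ?M i j *\<^sub>v (x t i - x t j)) (neighbors A i) \<in> carrier_vec n"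
        by (rule finsum_vec_closed[OF Fc])
      then show "x (Suc t) i \<in> carrier_vec n" using step i Suc by auto
    qed
  qed
  define X where "X t i k = x t i $ k" for t i k
  have coord: "X (Suc t) i k = X t i k - (1/(2*cs.w i)) * (\<Sum>j\<in>neighbors A i. cs.G (X t) i j k)"
    if i: "i<m" and k: "k<n" for t i k
  proof -
    have ci: "x t i \<in> carrier_vec n" using carr i by blast
    have cj: "x t j \<in> carrier_vec n" if "j \<in> neighbors A i" for j using carr cs.N_lt that by blast
    have Fc: "(\<lambda>j. ?M i j *\<^sub>v (x t i - x t j)) \<in> neighbors A i \<rightarrow> carrier_vec n"
      using cs.Mcar ci cj by (auto intro!: mult_mat_vec_carrier)
    have fc: "finsum_vec TYPE(real) n (\<lambda>j. ?M i j *\<^sub>v (x t i - x t j)) (neighbors A i) \<in> carrier_vec n"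
      by (rule finsum_vec_closed[OF Fc])
    have "X (Suc t) i k = x t i $ k - (1 / (2 * (real (card (neighbors A i)) + 1))) *
        (finsum_vec TYPE(real) n (\<lambda>j. ?M i j *\<^sub>v (x t i - x t j)) (neighbors A i)) $ k"
      using step i k fc ci by (simp add: X_def)
    also have "(finsum_vec TYPE(real) n (\<lambda>j. ?M i j *\<^sub>v (x t i - x t j)) (neighbors A i)) $ k
       = (\<Sum>j\<in>neighbors A i. (?M i j *\<^sub>v (x t i - x t j)) $ k)"
      by (rule index_finsum_vec[OF cs.N_fin k Fc])
    also have "\<dots> = (\<Sum>j\<in>neighbors A i. cs.G (X t) i j k)"
    proof (rule sum.cong[OF refl])
      fix j assume j: "j \<in> neighbors A i"
      have dc: "x t i - x t j \<in> carrier_vec n" using ci cj[OF j] by simp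
      have e: "mv D n (\<lambda>l. (x t i - x t j) $ l) = mv D n (\<lambda>l. X t i l - X t j l)" for D
        by (intro ext mv_cong) (use ci cj[OF j] in \<open>simp add: X_def\<close>)
      show "(?M i j *\<^sub>v (x t i - x t j)) $ k = cs.G (X t) i j k"
        unfolding cs.Mcoord[OF j dc k] e cs.G_def by simp
    qed
    finally show ?thesis by (simp add: X_def cs.w_def)
  qed
  define W where "W = (\<Sum>i<m. cs.w i)"
  define S0 where "S0 k = (\<Sum>i<m. cs.w i * X 0 i k)" for k
  define xsf where "xsf k = S0 k / W" for k
  have inv: "(\<Sum>i<m. cs.w i * X t i k) = S0 k" if k: "k < n" for t k
  proof (induction t)
    case 0 show ?case by (simp add: S0_def)
  next
    case (Suc t)
    have z: "(\<Sum>i<m. \<Sum>j\<in>neighbors A i. cs.G (X t) i j k) = (\<Sum>i<m. \<Sum>j\<in>neighbors A i. (0::real)) / 2"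
    proof (rule cs.half_sum)
      fix i j show "cs.G (X t) i j k + cs.G (X t) j i k = 0"
        unfolding cs.G_anti[of "X t" j i] by simp
    qed
    have "(\<Sum>i<m. cs.w i * X (Suc t) i k)
        = (\<Sum>i<m. cs.w i * X t i k - (\<Sum>j\<in>neighbors A i. cs.G (X t) i j k) / 2)"
    proof (rule sum.cong[OF refl])
      fix i assume "i \<in> {..<m}"
      then have i: "i < m" by simp
      show "cs.w i * X (Suc t) i k = cs.w i * X t i k - (\<Sum>j\<in>neighbors A i. cs.G (X t) i j k) / 2"
        unfolding coord[OF i k] using cs.w_pos[of i] by (simp add: field_simps)
    qed
    also have "\<dots> = S0 k"
      using Suc z by (simp add: sum_subtractf sum_divide_distrib[symmetric])
    finally show ?case .
  qed
  define e where "e t i k = X t i k - xsf k" for t i k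
  have eX: "e t = (\<lambda>i k. X t i k - xsf k)" for t by (intro ext) (simp add: e_def)
  have estep: "e (Suc t) i k = e t i k - (1/(2*cs.w i)) * (\<Sum>j\<in>neighbors A i. cs.G (e t) i j k)"
    if "i<m" "k<n" for t i k
    unfolding eX cs.G_shift using coord[OF that] by simp
  have ezero: "\<forall>k<n. (\<Sum>i<m. cs.w i * e t i k) = 0" for t
  proof (intro allI impI)
    fix k assume k: "k < n"
    have "(\<Sum>i<m. cs.w i * e t i k) = S0 k - W * xsf k"
      using inv[OF k, of t] by (simp add: e_def W_def algebra_simps sum_subtractf sum_distrib_left)
    also have "\<dots> = 0"
    proof (cases "m = 0")
      case True then show ?thesis by (simp add: S0_def W_def)
    next
      case False
      then have "W > 0" unfolding W_def using cs.w_pos by (intro sum_pos) auto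
      then show ?thesis by (simp add: xsf_def)
    qed
    finally show "(\<Sum>i<m. cs.w i * e t i k) = 0" .
  qed
  obtain \<gamma> where gp: "\<gamma> > 0" and coer: "\<And>y. (\<forall>k<n. (\<Sum>i<m. cs.w i * y i k) = 0) \<Longrightarrow> \<gamma> * cs.V y \<le> cs.Q y"
    using cs.coercive by blast
  define \<beta> where "\<beta> = min (\<gamma> / (2*(real m+1))) (1/2)"
  have bpos: "\<beta> > 0" using gp by (simp add: \<beta>_def)
  have ble: "\<beta> \<le> 1/2" unfolding \<beta>_def by (rule min.cobounded2)
  have Vdec: "cs.V (e (Suc t)) \<le> (1 - \<beta>) * cs.V (e t)" for t
  proof -
    have "cs.V (e (Suc t)) \<le> cs.V (e t) - cs.Q (e t) / (2*(real m+1))"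
      by (rule cs.step_V) (rule estep)
    moreover have "\<gamma> * cs.V (e t) \<le> cs.Q (e t)" by (rule coer[OF ezero])
    moreover have "\<beta> * cs.V (e t) \<le> \<gamma> / (2*(real m+1)) * cs.V (e t)"
      using cs.V_nonneg[of "e t"] by (intro mult_right_mono) (auto simp: \<beta>_def)
    moreover have "\<gamma> / (2*(real m+1)) * cs.V (e t) \<le> cs.Q (e t) / (2*(real m+1))"
    proof -
      have "\<gamma> * cs.V (e t) / (2*(real m+1)) \<le> cs.Q (e t) / (2*(real m+1))"
        using coer[OF ezero] by (intro divide_right_mono) auto
      then show ?thesis by simp
    qed
    ultimately show ?thesis by (simp add: algebra_simps)
  qed
  have Vt: "cs.V (e t) \<le> (1 - \<beta>)^t * cs.V (e 0)" for t
  proof (induction t)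
    case 0 show ?case by simp
  next
    case (Suc t)
    have "cs.V (e (Suc t)) \<le> (1 - \<beta>) * cs.V (e t)" by (rule Vdec)
    also have "\<dots> \<le> (1 - \<beta>) * ((1 - \<beta>)^t * cs.V (e 0))"
      using Suc ble by (intro mult_left_mono) auto
    finally show ?case by (simp add: mult_ac)
  qed
  define V0 where "V0 = cs.V (e 0)"
  have V0nn: "V0 \<ge> 0" by (simp add: V0_def cs.V_nonneg)
  define xs where "xs = vec n xsf"
  show ?thesis
  proof (rule bexI[of _ xs])
    show "xs \<in> carrier_vec n" by (simp add: xs_def)
    have p1: "sqrt V0 + 1 > 0" using V0nn by (simp add: add_nonneg_pos)
    have p2: "0 \<le> sqrt (1 - \<beta>)" using ble by simp
    have p3: "sqrt (1 - \<beta>) < 1" using bpos ble by simp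
    have "\<forall>t. \<forall>i<m. vnorm (x t i - xs) \<le> (sqrt V0 + 1) * sqrt (1 - \<beta>) ^ t"
    proof (intro allI impI)
    fix t i assume i: "i < m"
    have ci: "x t i \<in> carrier_vec n" using carr i by blast
    have "vnorm (x t i - xs) = sqrt (nrm2 n (e t i))"
      unfolding vnorm_def nrm2_def using ci
      by (intro arg_cong[where f=sqrt] sum.cong) (auto simp: xs_def e_def X_def)
    also have "nrm2 n (e t i) \<le> cs.V (e t)"
    proof -
      have "nrm2 n (e t i) \<le> cs.w i * nrm2 n (e t i)"
        using cs.w_ge1[of i] nrm2_nonneg[of n "e t i"] by (simp add: mult_le_cancel_right1)
      also have "\<dots> \<le> cs.V (e t)" unfolding cs.V_def using i cs.w_pos
        by (intro member_le_sum[where f="\<lambda>i. cs.w i * nrm2 n (e t i)"] mult_nonneg_nonneg)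
           (auto intro: less_imp_le nrm2_nonneg)
      finally show ?thesis .
    qed
    then have "sqrt (nrm2 n (e t i)) \<le> sqrt ((1 - \<beta>)^t * V0)"
      using Vt[of t] by (simp add: V0_def)
    also have "\<dots> = sqrt V0 * sqrt (1 - \<beta>) ^ t" by (simp add: real_sqrt_mult real_sqrt_power)
    also have "\<dots> \<le> (sqrt V0 + 1) * sqrt (1 - \<beta>) ^ t"
      using ble by (intro mult_right_mono) auto
    finally show "vnorm (x t i - xs) \<le> (sqrt V0 + 1) * sqrt (1 - \<beta>) ^ t" .
    qed
    then show "\<exists>c>0. \<exists>\<rho>. 0 \<le> \<rho> \<and> \<rho> < 1 \<and> (\<forall>t. \<forall>i<m. vnorm (x t i - xs) \<le> c * \<rho> ^ t)"
      using p1 p2 p3 by blast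
  qed
qed

end
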